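(* Let $g$ be an $n$-person no-sink WTT game form satisfying the standing assumptions below, and let $1\le k\le n$. Then $g$ contains no $k$-box.
   Context: Let $X_1,\dots,X_n$ and $A$ be finite nonempty sets. An $n$-person game form is a map $g: X_1\times\cdots\times X_n\to A$; elements of $X=X_1\times\cdots\times X_n$ are strategy profiles. For a direction $i\in[n]$ write $X_{-i}=\prod_{t\neq i}X_t$, and for $s\in X_i$, $y\in X_{-i}$ write $(s,y)$ for the profile with $i$-th coordinate $s$ and other coordinates $y$. The hyperplane perpendicular to direction $i$ at $s\in X_i$ is $H_s=\{x\in X: x_i=s\}$; for a profile $x$ write $H_i^x$ for the hyperplane perpendicular to direction $i$ containing $x$. $g$ is weakly totally tight (WTT) if for every $i\in[n]$, all $s\neq s'$ in $X_i$ and all $y\neq y'$ in $X_{-i}$, at least one of $g(s,y)=g(s,y')$, $g(s,y)=g(s',y)$, $g(s',y')=g(s',y)$, $g(s',y')=g(s,y')$ holds. A set $S\subseteq X$ is a constant region if there is $c\in A$ with $g(x)=c$ for all $x\in S$. For distinct $j,k\in X_i$, $H_j^{\neq}(k)=\{(j,y): y\in X_{-i},\ g(j,y)\neq g(k,y)\}$. We write $H_j\stackrel{c}{\longrightarrow}H_k$ if $g(x)=c$ for all $x\in H_j^{\neq}(k)$, and $H_j\stackrel{c}{\Longrightarrow}H_k$ if $H_j\stackrel{c}{\longrightarrow}H_k$ and there is no outcome $d$ with $H_k\stackrel{d}{\longrightarrow}H_j$. If there exist $k\in X_i\setminus\{j\}$ and $c$ with $H_j\stackrel{c}{\Longrightarrow}H_k$,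 $c$ is called the proper outcome of $H_j$ (for WTT $g$ it does not depend on $k$). We say an outcome $a$ is not the proper outcome of a hyperplane $H$ if $H$ has no proper outcome or its proper outcome differs from $a$. $H_j$ is a sink hyperplane if for every $k\in X_i\setminus\{j\}$ there is an outcome $c_k$ with $H_k\stackrel{c_k}{\longrightarrow}H_j$; $g$ is no-sink if there is no sink hyperplane in any direction. A WTT no-sink $g$ contains a $k$-box if there are profiles $x,y$ such that: $g(x)\neq g(y)$; $x$ and $y$ differ in exactly $k$ coordinates $i_1,\dots,i_k$; and for every $1\le t\le k$, $g(x)$ is not the proper outcome of $H_{i_t}^x$ and $g(y)$ is not the proper outcome of $H_{i_t}^y$. Standing assumptions: no hyperplane of $g$ is a constant region, and for every $i$ and distinct $j,k\in X_i$ there is $y\in X_{-i}$ with $g(j,y)\neq g(k,y)$. *)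

theory Defs
  imports "HOL-Library.FuncSet"
begin

text \<open>Players are 0..n-1. X i is the strategy set of player i. An element of X_{-i} is an extensional
  function on {..<n} - {i}; the profile (s,y) is y(i:=s).\<close>

definition profiles :: "nat \<Rightarrow> (nat \<Rightarrow> 'b set) \<Rightarrow> (nat \<Rightarrow> 'b) set" where
  "profiles n X = PiE {..<n} X"

definition others :: "nat \<Rightarrow> (nat \<Rightarrow> 'b set) \<Rightarrow> nat \<Rightarrow> (nat \<Rightarrow> 'b) set" where
  "others n X i = PiE ({..<n} - {i}) X"

definition game_form :: "nat \<Rightarrow> (nat \<Rightarrow> 'b set) \<Rightarrow> 'a set \<Rightarrow> ((nat \<Rightarrow> 'b) \<Rightarrow> 'a) \<Rightarrow> bool" where
  "game_form n X A g \<longleftrightarrow> (\<forall>i<n. finite (X i) \<and> X i \<noteq> {}) \<and> finite A \<and> A \<noteq> {}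
     \<and> (\<forall>x\<in>profiles n X. g x \<in> A)"

definition WTT :: "nat \<Rightarrow> (nat \<Rightarrow> 'b set) \<Rightarrow> ((nat \<Rightarrow> 'b) \<Rightarrow> 'a) \<Rightarrow> bool" where
  "WTT n X g \<longleftrightarrow> (\<forall>i<n. \<forall>s\<in>X i. \<forall>s'\<in>X i. s \<noteq> s' \<longrightarrow>
     (\<forall>y\<in>others n X i. \<forall>y'\<in>others n X i. y \<noteq> y' \<longrightarrow>
        g (y(i:=s)) = g (y'(i:=s)) \<or> g (y(i:=s)) = g (y(i:=s')) \<or>
        g (y'(i:=s')) = g (y(i:=s')) \<or> g (y'(i:=s')) = g (y'(i:=s))))"

definition Hneq :: "nat \<Rightarrow> (nat \<Rightarrow> 'b set) \<Rightarrow> ((nat \<Rightarrow> 'b) \<Rightarrow> 'a) \<Rightarrow> nat \<Rightarrow> 'b \<Rightarrow> 'b \<Rightarrow> (nat \<Rightarrow> 'b) set" where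
  "Hneq n X g i j k = {y(i:=j) | y. y \<in> others n X i \<and> g (y(i:=j)) \<noteq> g (y(i:=k))}"

definition arrow :: "nat \<Rightarrow> (nat \<Rightarrow> 'b set) \<Rightarrow> ((nat \<Rightarrow> 'b) \<Rightarrow> 'a) \<Rightarrow> nat \<Rightarrow> 'b \<Rightarrow> 'a \<Rightarrow> 'b \<Rightarrow> bool" where
  "arrow n X g i j c k \<longleftrightarrow> (\<forall>x\<in>Hneq n X g i j k. g x = c)"

definition darrow :: "nat \<Rightarrow> (nat \<Rightarrow> 'b set) \<Rightarrow> 'a set \<Rightarrow> ((nat \<Rightarrow> 'b) \<Rightarrow> 'a) \<Rightarrow> nat \<Rightarrow> 'b \<Rightarrow> 'a \<Rightarrow> 'b \<Rightarrow> bool" where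
  "darrow n X A g i j c k \<longleftrightarrow> arrow n X g i j c k \<and> \<not> (\<exists>d\<in>A. arrow n X g i k d j)"

definition proper_outcome :: "nat \<Rightarrow> (nat \<Rightarrow> 'b set) \<Rightarrow> 'a set \<Rightarrow> ((nat \<Rightarrow> 'b) \<Rightarrow> 'a) \<Rightarrow> nat \<Rightarrow> 'b \<Rightarrow> 'a \<Rightarrow> bool" where
  "proper_outcome n X A g i j c \<longleftrightarrow> (\<exists>k\<in>X i. k \<noteq> j \<and> darrow n X A g i j c k)"

definition sink_hyperplane :: "nat \<Rightarrow> (nat \<Rightarrow> 'b set) \<Rightarrow> 'a set \<Rightarrow> ((nat \<Rightarrow> 'b) \<Rightarrow> 'a) \<Rightarrow> nat \<Rightarrow> 'b \<Rightarrow> bool" where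
  "sink_hyperplane n X A g i j \<longleftrightarrow> (\<forall>k\<in>X i - {j}. \<exists>c\<in>A. arrow n X g i k c j)"

definition no_sink :: "nat \<Rightarrow> (nat \<Rightarrow> 'b set) \<Rightarrow> 'a set \<Rightarrow> ((nat \<Rightarrow> 'b) \<Rightarrow> 'a) \<Rightarrow> bool" where
  "no_sink n X A g \<longleftrightarrow> \<not> (\<exists>i<n. \<exists>j\<in>X i. sink_hyperplane n X A g i j)"

definition standing_assumptions :: "nat \<Rightarrow> (nat \<Rightarrow> 'b set) \<Rightarrow> ((nat \<Rightarrow> 'b) \<Rightarrow> 'a) \<Rightarrow> bool" where
  "standing_assumptions n X g \<longleftrightarrow>
     (\<forall>i<n. \<forall>s\<in>X i. \<not> (\<exists>c. \<forall>x\<in>profiles n X. x i = s \<longrightarrow> g x = c)) \<and>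
     (\<forall>i<n. \<forall>j\<in>X i. \<forall>k\<in>X i. j \<noteq> k \<longrightarrow> (\<exists>y\<in>others n X i. g (y(i:=j)) \<noteq> g (y(i:=k))))"

text \<open>g contains a k-box. "a is not the proper outcome of H_i^x" is rendered as
  \<not> proper_outcome ... i (x i) a.\<close>
definition has_box :: "nat \<Rightarrow> (nat \<Rightarrow> 'b set) \<Rightarrow> 'a set \<Rightarrow> ((nat \<Rightarrow> 'b) \<Rightarrow> 'a) \<Rightarrow> nat \<Rightarrow> bool" where
  "has_box n X A g k \<longleftrightarrow> (\<exists>x\<in>profiles n X. \<exists>y\<in>profiles n X. g x \<noteq> g y \<and>
     card {i. i < n \<and> x i \<noteq> y i} = k \<and>
     (\<forall>i<n. x i \<noteq> y i \<longrightarrow>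
        \<not> proper_outcome n X A g i (x i) (g x) \<and> \<not> proper_outcome n X A g i (y i) (g y)))"

end

theory Submission
  imports Defs
begin

lemma upd_profiles:
  assumes "y \<in> others n X i" "i < n" "s \<in> X i"
  shows "y(i:=s) \<in> profiles n X"
proof -
  have "insert i ({..<n} - {i}) = {..<n}" using assms(2) by auto
  have "y(i:=s) \<in> PiE (insert i ({..<n} - {i})) X"
    by (rule PiE_fun_upd) (use assms in \<open>auto simp: others_def\<close>)
  thus ?thesis using \<open>insert i ({..<n} - {i}) = {..<n}\<close> unfolding profiles_def by simp
qed

lemma profile_split:
  assumes "x \<in> profiles n X" "i < n"
  shows "restrict x ({..<n} - {i}) \<in> others n X i"
    and "(restrict x ({..<n} - {i}))(i := x i) = x"
proof -
  show "restrict x ({..<n} - {i}) \<in> others n X i"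
    using assms unfolding others_def profiles_def by (auto simp: PiE_iff)
  show "(restrict x ({..<n} - {i}))(i := x i) = x"
    using assms unfolding profiles_def by (auto simp: PiE_iff extensional_def)
qed

lemma profile_upd:
  assumes "x \<in> profiles n X" "i < n" "s \<in> X i"
  shows "x(i := s) \<in> profiles n X"
  using assms unfolding profiles_def by (auto simp: PiE_iff extensional_def)

lemma arrow_iff:
  "arrow n X g i j c k \<longleftrightarrow> (\<forall>y\<in>others n X i. g (y(i:=j)) \<noteq> g (y(i:=k)) \<longrightarrow> g (y(i:=j)) = c)"
  unfolding arrow_def Hneq_def by blast

context
  fixes n :: nat and X :: "nat \<Rightarrow> 'b set" and A :: "'a set" and g :: "(nat \<Rightarrow> 'b) \<Rightarrow> 'a"
  assumes gf: "game_form n X A g" and wtt: "WTT n X g"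
begin

lemma lemL:
  assumes i: "i < n" and s: "s \<in> X i" and s': "s' \<in> X i" and ss: "s \<noteq> s'"
    and w1: "w1 \<in> others n X i" and w2: "w2 \<in> others n X i"
    and d1: "g (w1(i:=s)) \<noteq> g (w1(i:=s'))" and d2: "g (w2(i:=s)) \<noteq> g (w2(i:=s'))"
    and v: "g (w1(i:=s')) \<noteq> g (w2(i:=s'))"
    and w: "w \<in> others n X i" and dw: "g (w(i:=s)) \<noteq> g (w(i:=s'))"
  shows "g (w(i:=s)) = g (w1(i:=s))"
proof -
  have W: "\<And>y y'. y \<in> others n X i \<Longrightarrow> y' \<in> others n X i \<Longrightarrow> y \<noteq> y' \<Longrightarrow>
        g (y(i:=s)) = g (y'(i:=s)) \<or> g (y(i:=s)) = g (y(i:=s')) \<or>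
        g (y'(i:=s')) = g (y(i:=s')) \<or> g (y'(i:=s')) = g (y'(i:=s))"
    using wtt i s s' ss unfolding WTT_def by blast
  have "w1 \<noteq> w2" using v by auto
  hence e12: "g (w1(i:=s)) = g (w2(i:=s))" using W[OF w1 w2] d1 d2 v by auto
  show ?thesis
  proof (cases "w = w1")
    case True then show ?thesis by simp
  next
    case F1: False
    show ?thesis
    proof (cases "w = w2")
      case True then show ?thesis using e12 by simp
    next
      case F2: False
      from W[OF w w1 F1] W[OF w w2 F2] dw d1 d2 v e12 show ?thesis by auto
    qed
  qed
qed

lemma nonarrow_witness:
  assumes i: "i < n" and s': "s' \<in> X i" and s: "s \<in> X i"
    and na: "\<not> (\<exists>a\<in>A. arrow n X g i s' a s)"
  shows "\<exists>w1\<in>others n X i. \<exists>w2\<in>others n X i. g (w1(i:=s)) \<noteq> g (w1(i:=s')) \<and>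
     g (w2(i:=s)) \<noteq> g (w2(i:=s')) \<and> g (w1(i:=s')) \<noteq> g (w2(i:=s'))"
proof (rule ccontr)
  assume H: "\<not> ?thesis"
  show False
  proof (cases "\<exists>w0\<in>others n X i. g (w0(i:=s)) \<noteq> g (w0(i:=s'))")
    case True
    then obtain w0 where w0: "w0 \<in> others n X i" "g (w0(i:=s)) \<noteq> g (w0(i:=s'))" by blast
    have "g (w0(i:=s')) \<in> A" using gf upd_profiles[OF w0(1) i s'] unfolding game_form_def by blast
    moreover have "arrow n X g i s' (g (w0(i:=s'))) s"
      unfolding arrow_iff using H w0 by metis
    ultimately show False using na by blast
  next
    case False
    obtain a where "a \<in> A" using gf unfolding game_form_def by blast
    moreover have "arrow n X g i s' a s" unfolding arrow_iff using False by metis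
    ultimately show False using na by blast
  qed
qed

lemma strict_arrow:
  assumes i: "i < n" and s': "s' \<in> X i" and s: "s \<in> X i" and ss: "s \<noteq> s'"
    and na: "\<not> (\<exists>a\<in>A. arrow n X g i s' a s)"
  shows "\<exists>w1\<in>others n X i. \<exists>w2\<in>others n X i. g (w1(i:=s)) \<noteq> g (w1(i:=s')) \<and>
     g (w2(i:=s)) \<noteq> g (w2(i:=s')) \<and> g (w1(i:=s')) \<noteq> g (w2(i:=s')) \<and>
     g (w2(i:=s)) = g (w1(i:=s)) \<and>
     arrow n X g i s (g (w1(i:=s))) s' \<and> proper_outcome n X A g i s (g (w1(i:=s)))"
proof -
  obtain w1 w2 where w: "w1 \<in> others n X i" "w2 \<in> others n X i" "g (w1(i:=s)) \<noteq> g (w1(i:=s'))"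
     "g (w2(i:=s)) \<noteq> g (w2(i:=s'))" "g (w1(i:=s')) \<noteq> g (w2(i:=s'))"
    using nonarrow_witness[OF i s' s na] by blast
  have ar: "arrow n X g i s (g (w1(i:=s))) s'"
    unfolding arrow_iff using lemL[OF i s s' ss w(1,2,3,4,5)] by blast
  have "g (w2(i:=s)) = g (w1(i:=s))" using lemL[OF i s s' ss w(1,2,3,4,5) w(2,4)] .
  moreover have "proper_outcome n X A g i s (g (w1(i:=s)))"
    unfolding proper_outcome_def darrow_def using ar na s' ss by (intro bexI[of _ s']) auto
  ultimately show ?thesis using w ar by blast
qed

lemma core:
  assumes ns: "no_sink n X A g"
    and i: "i < n" and j: "j \<in> X i" and l: "l \<in> X i" and jl: "j \<noteq> l"
    and z: "z \<in> others n X i" and w: "w \<in> others n X i"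
    and dz: "g (z(i:=j)) \<noteq> g (z(i:=l))" and dw: "g (w(i:=l)) \<noteq> g (w(i:=j))"
    and npj: "\<not> proper_outcome n X A g i j (g (z(i:=j)))"
    and npl: "\<not> proper_outcome n X A g i l (g (w(i:=l)))"
    and ne: "g (z(i:=j)) \<noteq> g (w(i:=l))"
  shows False
proof -
  define c where "c = g (z(i:=j))"
  define d where "d = g (w(i:=l))"
  have "\<exists>a\<in>A. arrow n X g i j a l"
  proof (rule ccontr)
    assume na: "\<not> ?thesis"
    obtain w1 where w1: "w1 \<in> others n X i" "arrow n X g i l (g (w1(i:=l))) j"
        "proper_outcome n X A g i l (g (w1(i:=l)))"
      using strict_arrow[OF i j l jl[symmetric] na] by blast
    have "g (w(i:=l)) = g (w1(i:=l))" using w1(2) w dw unfolding arrow_iff by blast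
    thus False using npl w1(3) by simp
  qed
  then obtain a where "arrow n X g i j a l" by blast
  hence arJ: "arrow n X g i j c l" using z dz unfolding arrow_iff c_def by metis
  have "\<exists>a\<in>A. arrow n X g i l a j"
  proof (rule ccontr)
    assume na: "\<not> ?thesis"
    obtain w1 where w1: "w1 \<in> others n X i" "arrow n X g i j (g (w1(i:=j))) l"
        "proper_outcome n X A g i j (g (w1(i:=j)))"
      using strict_arrow[OF i l j jl na] by blast
    have "g (z(i:=j)) = g (w1(i:=j))" using w1(2) z dz unfolding arrow_iff by blast
    thus False using npj w1(3) by simp
  qed
  then obtain b where "arrow n X g i l b j" by blast
  hence arL: "arrow n X g i l d j" using w dw unfolding arrow_iff d_def by metis
  have gzl: "g (z(i:=l)) = d" using arL z dz unfolding arrow_iff by metis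
  obtain m where m: "m \<in> X i" "m \<noteq> j" "\<not> (\<exists>a\<in>A. arrow n X g i m a j)"
    using ns i j unfolding no_sink_def sink_hyperplane_def by blast
  obtain w1 w2 where ww: "w1 \<in> others n X i" "w2 \<in> others n X i" "g (w1(i:=j)) \<noteq> g (w1(i:=m))"
     "g (w2(i:=j)) \<noteq> g (w2(i:=m))" "g (w1(i:=m)) \<noteq> g (w2(i:=m))"
     "g (w2(i:=j)) = g (w1(i:=j))"
     "arrow n X g i j (g (w1(i:=j))) m" "proper_outcome n X A g i j (g (w1(i:=j)))"
    using strict_arrow[OF i m(1) j m(2)[symmetric] m(3)] by blast
  define p where "p = g (w1(i:=j))"
  have pc: "p \<noteq> c" using npj ww(8) unfolding p_def c_def by auto
  have hl1: "g (w1(i:=l)) = p"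
    using arJ ww(1) pc unfolding arrow_iff p_def by metis
  have hl2: "g (w2(i:=l)) = p"
    using arJ ww(2,6) pc unfolding arrow_iff p_def by metis
  have gzm: "g (z(i:=m)) = c"
    using ww(7) z pc unfolding arrow_iff p_def c_def by metis
  have cd: "c \<noteq> d" using ne unfolding c_def d_def .
  have ml: "l \<noteq> m" using gzm gzl cd by auto
  have e1: "g (w1(i:=l)) \<noteq> g (w1(i:=m))" using hl1 ww(3) unfolding p_def by simp
  have e2: "g (w2(i:=l)) \<noteq> g (w2(i:=m))" using hl2 ww(4,6) unfolding p_def by simp
  have arLM: "arrow n X g i l p m"
    unfolding arrow_iff using lemL[OF i l m(1) ml ww(1,2) e1 e2 ww(5)] hl1 by metis
  have "d = p" using arLM z gzl gzm cd unfolding arrow_iff by metis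
  hence arLM': "arrow n X g i l d m" using arLM by simp
  have nam: "\<not> (\<exists>b\<in>A. arrow n X g i m b l)"
  proof
    assume "\<exists>b\<in>A. arrow n X g i m b l"
    then obtain b where "arrow n X g i m b l" by blast
    hence "g (w1(i:=m)) = b" "g (w2(i:=m)) = b" using ww(1,2) e1 e2 unfolding arrow_iff by metis+
    thus False using ww(5) by simp
  qed
  have "proper_outcome n X A g i l d"
    unfolding proper_outcome_def darrow_def using arLM' nam m(1) ml
    by (intro bexI[of _ m]) auto
  thus False using npl unfolding d_def by simp
qed

lemma no_box_aux:
  assumes ns: "no_sink n X A g"
  shows "\<And>x y. card {i. i < n \<and> x i \<noteq> y i} = N \<Longrightarrow> x \<in> profiles n X \<Longrightarrow> y \<in> profiles n X \<Longrightarrow>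
     g x \<noteq> g y \<Longrightarrow> (\<forall>i<n. x i \<noteq> y i \<longrightarrow>
        \<not> proper_outcome n X A g i (x i) (g x) \<and> \<not> proper_outcome n X A g i (y i) (g y)) \<Longrightarrow> False"
proof (induction N)
  case (0 x y)
  have "x = y"
  proof (rule PiE_ext)
    show "x \<in> PiE {..<n} X" "y \<in> PiE {..<n} X" using 0 unfolding profiles_def by auto
    fix t assume "t \<in> {..<n}"
    thus "x t = y t" using 0(1) by auto
  qed
  thus False using 0 by simp
next
  case (Suc N x y)
  let ?S = "{i. i < n \<and> x i \<noteq> y i}"
  have fin: "finite ?S" by simp
  have "?S \<noteq> {}" using Suc.prems(1) by (metis card.empty nat.simps(3))
  then obtain i where i: "i < n" "x i \<noteq> y i" by auto
  have xi: "x i \<in> X i" and yi: "y i \<in> X i"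
    using Suc.prems(2,3) i unfolding profiles_def by (auto simp: PiE_iff)
  have cardS: "card (?S - {i}) = N" using Suc.prems(1) i fin by simp
  show False
  proof (cases "g (x(i := y i)) = g x")
    case True
    have S': "{t. t < n \<and> (x(i := y i)) t \<noteq> y t} = ?S - {i}" by auto
    show False
    proof (rule Suc.IH)
      show "card {t. t < n \<and> (x(i := y i)) t \<noteq> y t} = N" using S' cardS by simp
      show "x(i := y i) \<in> profiles n X" using profile_upd[OF Suc.prems(2) i(1) yi] .
      show "y \<in> profiles n X" by fact
      show "g (x(i := y i)) \<noteq> g y" using True Suc.prems(4) by simp
      show "\<forall>t<n. (x(i := y i)) t \<noteq> y t \<longrightarrow>
        \<not> proper_outcome n X A g t ((x(i := y i)) t) (g (x(i := y i))) \<and> \<not> proper_outcome n X A g t (y t) (g y)"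
        using Suc.prems(5) True by auto
    qed
  next
    case gx: False
    show False
    proof (cases "g (y(i := x i)) = g y")
      case True
      have S': "{t. t < n \<and> x t \<noteq> (y(i := x i)) t} = ?S - {i}" by auto
      show False
      proof (rule Suc.IH)
        show "card {t. t < n \<and> x t \<noteq> (y(i := x i)) t} = N" using S' cardS by simp
        show "y(i := x i) \<in> profiles n X" using profile_upd[OF Suc.prems(3) i(1) xi] .
        show "x \<in> profiles n X" by fact
        show "g x \<noteq> g (y(i := x i))" using True Suc.prems(4) by simp
        show "\<forall>t<n. x t \<noteq> (y(i := x i)) t \<longrightarrow>
          \<not> proper_outcome n X A g t (x t) (g x) \<and> \<not> proper_outcome n X A g t ((y(i := x i)) t) (g (y(i := x i)))"
          using Suc.prems(5) True by auto
      qed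
    next
      case gy: False
      define z where "z = restrict x ({..<n} - {i})"
      define w where "w = restrict y ({..<n} - {i})"
      have z: "z \<in> others n X i" and xz: "z(i := x i) = x"
        using profile_split[OF Suc.prems(2) i(1)] unfolding z_def by auto
      have w: "w \<in> others n X i" and yw: "w(i := y i) = y"
        using profile_split[OF Suc.prems(3) i(1)] unfolding w_def by auto
      have xz': "z(i := y i) = x(i := y i)" using xz by (metis fun_upd_upd)
      have yw': "w(i := x i) = y(i := x i)" using yw by (metis fun_upd_upd)
      show False
      proof (rule core[OF ns i(1) xi yi i(2) z w])
        show "g (z(i := x i)) \<noteq> g (z(i := y i))" using xz xz' gx by simp
        show "g (w(i := y i)) \<noteq> g (w(i := x i))" using yw yw' gy by simp
        show "\<not> proper_outcome n X A g i (x i) (g (z(i := x i)))" using xz Suc.prems(5) i by simp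
        show "\<not> proper_outcome n X A g i (y i) (g (w(i := y i)))" using yw Suc.prems(5) i by simp
        show "g (z(i := x i)) \<noteq> g (w(i := y i))" using xz yw Suc.prems(4) by simp
      qed
    qed
  qed
qed

end

theorem mainTheorem8:
  fixes n k :: nat and X :: "nat \<Rightarrow> 'b set" and A :: "'a set" and g :: "(nat \<Rightarrow> 'b) \<Rightarrow> 'a"
  assumes "game_form n X A g"
    and "WTT n X g"
    and "no_sink n X A g"
    and "standing_assumptions n X g"
    and "1 \<le> k" and "k \<le> n"
  shows "\<not> has_box n X A g k"
  unfolding has_box_def
  using no_box_aux[OF assms(1,2,3)] by blast

end
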